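(* Let $\mathbb{X}$ be a real or complex Banach space with norm $|\cdot|$, let $k\ge 1$ be an integer, and let $f_n:\mathbb{X}^{k+1}\to\mathbb{X}$, $n=0,1,2,\dots$, be functions. Assume there is a real number $\alpha\in(0,1)$ such that for every $n$ and all $(\xi_0,\xi_1,\dots,\xi_k)\in\mathbb{X}^{k+1}$, $$|f_n(\xi_0,\xi_1,\dots,\xi_k)|\le \alpha\max\{|\xi_0|,\dots,|\xi_k|\}.$$ Then every solution $\{x_n\}$ of the difference equation $x_{n+1}=f_n(x_n,x_{n-1},\dots,x_{n-k})$, $n\ge 0$, with initial values $x_0,x_{-1},\dots,x_{-k}\in\mathbb{X}$ satisfies, for all $n\ge 1$, $$|x_n|\le \alpha^{n/(k+1)}\max\{|x_0|,|x_{-1}|,\dots,|x_{-k}|\}.$$ In particular, the origin is globally exponentially stable.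
   Context: A solution of $x_{n+1}=f_n(x_n,\dots,x_{n-k})$ is the sequence $\{x_n\}_{n\ge -k}$ generated by iteration from given initial values $x_0,x_{-1},\dots,x_{-k}$. The origin is called globally exponentially stable if every solution satisfies $|x_n|\le c^n\mu$ for all $n$, where $c\in(0,1)$ and $\mu>0$ are real constants and $c$ does not depend on the initial values. *)

theory Defs
  imports "HOL-Analysis.Analysis"
begin

text \<open>A point of X^(k+1) is a list of length k+1: (xi_0, ..., xi_k).
  A solution is a map x :: int => 'a; only its values at indices >= -k matter.\<close>

definition is_solution :: "(nat \<Rightarrow> 'a list \<Rightarrow> 'a) \<Rightarrow> nat \<Rightarrow> (int \<Rightarrow> 'a) \<Rightarrow> bool" where
  "is_solution f k x \<longleftrightarrow>
     (\<forall>n::nat. x (int n + 1) = f n (map (\<lambda>j. x (int n - int j)) [0..<k+1]))"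

definition glob_exp_stable :: "(nat \<Rightarrow> 'a::real_normed_vector list \<Rightarrow> 'a) \<Rightarrow> nat \<Rightarrow> bool" where
  "glob_exp_stable f k \<longleftrightarrow>
     (\<exists>c::real. 0 < c \<and> c < 1 \<and>
        (\<forall>x. is_solution f k x \<longrightarrow>
           (\<exists>\<mu>::real. \<mu> > 0 \<and> (\<forall>n::int. n \<ge> - int k \<longrightarrow> norm (x n) \<le> c powr (real_of_int n) * \<mu>))))"

end

theory Submission
  imports Defs
begin

lemma bound_main:
  fixes f :: "nat \<Rightarrow> 'a::banach list \<Rightarrow> 'a" and k :: nat and \<alpha> :: real
  assumes "0 < \<alpha>" and "\<alpha> < 1"
    and fb: "\<And>n \<xi>. length \<xi> = k + 1 \<Longrightarrow> norm (f n \<xi>) \<le> \<alpha> * Max (norm ` set \<xi>)"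
    and sol: "is_solution f k x"
  defines "M \<equiv> Max ((\<lambda>j. norm (x (- int j))) ` {0..k})"
  shows "\<And>m::int. m \<ge> - int k \<Longrightarrow> norm (x m) \<le> M * \<alpha> powr (real_of_int (max 0 m) / real (k+1))"
proof -
  have neg: "norm (x m) \<le> M" if "m \<ge> - int k" "m \<le> 0" for m
  proof -
    have "nat (-m) \<in> {0..k}" using that by auto
    moreover have "x m = x (- int (nat (-m)))" using that by simp
    ultimately show ?thesis unfolding M_def
      by (metis (no_types, lifting) Max_ge finite_atLeastAtMost finite_imageI image_eqI)
  qed
  have M0: "M \<ge> 0" using neg[of 0] norm_ge_zero[of "x 0"] by linarith
  have pos: "norm (x (int n)) \<le> M * \<alpha> powr (real n / real (k+1))" for n
  proof (induction n rule: less_induct)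
    case (less n)
    show ?case
    proof (cases n)
      case 0
      have "norm (x (int n)) \<le> M" using neg[of 0] 0 by simp
      then show ?thesis using 0 assms(1) by simp
    next
      case (Suc p)
      define B where "B = M * \<alpha> powr (real (p - k) / real (k+1))"
      have each: "norm (x (int p - int j)) \<le> B" if "j < k+1" for j
      proof (cases "int p - int j \<le> 0")
        case True
        then have "norm (x (int p - int j)) \<le> M" using neg that by auto
        also have "M \<le> B"
        proof -
          have pk: "p - k = 0" using True that by linarith
          have e0: "real (p - k) / real (k+1) = 0" by (simp only: pk of_nat_0 div_0)
          have "B = M" unfolding B_def e0 using assms(1) powr_zero_eq_one[of \<alpha>] by simp
          then show ?thesis by simp
        qed
        finally show ?thesis .
      next
        case False
        then have eq: "int p - int j = int (p - j)" by simp
        have "p - j < n" using Suc False by auto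
        then have "norm (x (int (p-j))) \<le> M * \<alpha> powr (real (p-j) / real (k+1))" using less by blast
        also have "\<dots> \<le> B" unfolding B_def
          apply (rule mult_left_mono[OF _ M0])
          apply (rule powr_mono')
          using that assms(1,2) by (auto simp: divide_right_mono)
        finally show ?thesis unfolding eq .
      qed
      have "x (int n) = f p (map (\<lambda>j. x (int p - int j)) [0..<k+1])"
        using sol Suc unfolding is_solution_def by (metis of_nat_Suc add.commute)
      moreover have "norm (f p (map (\<lambda>j. x (int p - int j)) [0..<k+1])) \<le> \<alpha> * Max (norm ` set (map (\<lambda>j. x (int p - int j)) [0..<k+1]))"
        by (rule fb) simp
      ultimately have "norm (x (int n)) \<le> \<alpha> * Max (norm ` set (map (\<lambda>j. x (int p - int j)) [0..<k+1]))"
        by (simp only:)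
      also have "Max (norm ` set (map (\<lambda>j. x (int p - int j)) [0..<k+1])) \<le> B"
        using each by (auto intro!: Max.boundedI)
      then have "\<alpha> * Max (norm ` set (map (\<lambda>j. x (int p - int j)) [0..<k+1])) \<le> \<alpha> * B"
        using assms(1) by simp
      also have "\<alpha> * B \<le> M * \<alpha> powr (real n / real (k+1))"
      proof (cases "p \<ge> k")
        case True
        have "\<alpha> * \<alpha> powr (real (p - k) / real (k+1)) = \<alpha> powr (real (p - k) / real (k+1) + 1)"
          using assms(1) by (simp add: powr_add)
        also have "real (p - k) / real (k+1) + 1 = real n / real (k+1)"
          using True Suc by (simp add: field_simps of_nat_diff)
        finally show ?thesis unfolding B_def by (simp add: algebra_simps)
      next
        case False
        then have pk: "p - k = 0" by linarith
        have e0: "real (p - k) / real (k+1) = 0" by (simp only: pk of_nat_0 div_0)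
        have h1: "\<alpha> * B = M * \<alpha>" unfolding B_def e0 using assms(1) powr_zero_eq_one[of \<alpha>] by simp
        have "\<alpha> powr 1 \<le> \<alpha> powr (real n / real (k+1))"
          apply (rule powr_mono') using False Suc assms(1,2) by (auto simp: field_simps)
        moreover have "\<alpha> powr 1 = \<alpha>" using assms(1) by simp
        ultimately have "\<alpha> \<le> \<alpha> powr (real n / real (k+1))" by linarith
        then have "M * \<alpha> \<le> M * \<alpha> powr (real n / real (k+1))"
          by (rule mult_left_mono[OF _ M0])
        then show ?thesis unfolding h1 .
      qed
      finally show ?thesis .
    qed
  qed
  fix m :: int assume m: "m \<ge> - int k"
  show "norm (x m) \<le> M * \<alpha> powr (real_of_int (max 0 m) / real (k+1))"
  proof (cases "m \<le> 0")
    case True then show ?thesis using neg m assms(1) by simp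
  next
    case False
    then have "m = int (nat m)" by simp
    then show ?thesis using pos[of "nat m"] False by simp
  qed
qed

theorem lemma1:
  fixes f :: "nat \<Rightarrow> 'a::banach list \<Rightarrow> 'a" and k :: nat and \<alpha> :: real
  assumes "k \<ge> 1"
    and "0 < \<alpha>" and "\<alpha> < 1"
    and "\<And>n \<xi>. length \<xi> = k + 1 \<Longrightarrow> norm (f n \<xi>) \<le> \<alpha> * Max (norm ` set \<xi>)"
  shows "(\<forall>x. is_solution f k x \<longrightarrow>
            (\<forall>n::nat. n \<ge> 1 \<longrightarrow>
               norm (x (int n)) \<le> \<alpha> powr (real n / real (k + 1)) *
                 Max ((\<lambda>j. norm (x (- int j))) ` {0..k})))
         \<and> glob_exp_stable f k"
proof
  show "\<forall>x. is_solution f k x \<longrightarrow>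
            (\<forall>n::nat. n \<ge> 1 \<longrightarrow>
               norm (x (int n)) \<le> \<alpha> powr (real n / real (k + 1)) *
                 Max ((\<lambda>j. norm (x (- int j))) ` {0..k}))"
  proof (intro allI impI)
    fix x n assume s: "is_solution f k x" and "(n::nat) \<ge> 1"
    from bound_main[OF assms(2,3,4) s, of "int n"] show "norm (x (int n)) \<le> \<alpha> powr (real n / real (k + 1)) *
                 Max ((\<lambda>j. norm (x (- int j))) ` {0..k})" by (simp add: mult.commute)
  qed
next
  define c where "c = \<alpha> powr (1 / real (k+1))"
  have c0: "0 < c" using assms(2) by (simp add: c_def)
  have c1: "c < 1"
  proof -
    have "\<alpha> powr (1 / real (k+1)) < 1 powr (1 / real (k+1))"
      by (rule powr_less_mono2) (use assms(2,3) in auto)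
    then show ?thesis by (simp add: c_def)
  qed
  show "glob_exp_stable f k" unfolding glob_exp_stable_def
  proof (rule exI[of _ c], intro conjI c0 c1 allI impI)
    fix x assume s: "is_solution f k x"
    define M where "M = Max ((\<lambda>j. norm (x (- int j))) ` {0..k})"
    have M0: "M \<ge> 0" unfolding M_def
      by (meson Max_ge atLeastAtMost_iff finite_atLeastAtMost finite_imageI image_eqI le0 norm_ge_zero order_trans)
    show "\<exists>\<mu>>0. \<forall>n. - int k \<le> n \<longrightarrow> norm (x n) \<le> c powr real_of_int n * \<mu>"
    proof (rule exI[of _ "M+1"], intro conjI allI impI)
      show "M + 1 > 0" using M0 by simp
    next
      fix n :: int assume n: "- int k \<le> n"
      have b: "norm (x n) \<le> M * \<alpha> powr (real_of_int (max 0 n) / real (k+1))"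
        using bound_main[OF assms(2,3,4) s n] unfolding M_def .
      have "\<alpha> powr (real_of_int (max 0 n) / real (k+1)) = c powr real_of_int (max 0 n)"
        unfolding c_def using assms(2) by (simp add: powr_powr)
      also have "\<dots> \<le> c powr real_of_int n"
        apply (cases "n \<ge> 0")
        subgoal by simp
        subgoal using powr_mono'[of "real_of_int n" 0 c] c0 c1 by simp
        done
      finally have "M * \<alpha> powr (real_of_int (max 0 n) / real (k+1)) \<le> M * c powr real_of_int n"
        by (rule mult_left_mono[OF _ M0])
      with b have "norm (x n) \<le> M * c powr real_of_int n" by linarith
      also have "\<dots> \<le> c powr real_of_int n * (M+1)" using c0 by (simp add: algebra_simps)
      finally show "norm (x n) \<le> c powr real_of_int n * (M + 1)" .
    qed
  qed
qed

end
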